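(* In the setting of the context, let $l\in\{0,1,\dots,N\}$. If $i\in J_m$ with $m+1\le l$, then $t_i^{l+1}\ne t_{i-1}^{l+1}$. Consequently, for every $u\in T_{l+1}$, the number of pairs $(i,s)$ with $i\in\{1,\dots,n\}$, $i\in J_m$ for some $m$ with $m+1\le l$, $s\in\{i-1,i\}$, and $t_s^{l+1}=u$ (hence $t_s^l=\pi_l(u)$) is at most two.
   Context: Fix $S>0$, $q\in(0,1)$, $d(s,t)=|s-t|^q$ on $[0,S]$, and $r\ge4$. For $n\ge0$ let $T_n=\{kr^{-n/q}S:k=0,1,2,\dots\}\cap[0,S]$ and $\pi_n(t)=\max\{s\in T_n:s\le t\}$. Let $0\le t_0<t_1<\dots<t_n\le S$ and for $m\ge0$, $J_m=\{i\in\{1,\dots,n\}:r^{-m-1}S^q<d(t_{i-1},t_i)\le r^{-m}S^q\}$. Let $N$ be an integer with $J_m=\emptyset$ for $m> N$; define $t_i^{N+1}=\pi_{N+1}(t_i)$ and recursively $t_i^l=\pi_l(t_i^{l+1})$ for $l=N,\dots,0$. *)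

theory Defs
  imports Complex_Main
begin

definition dq :: "real \<Rightarrow> real \<Rightarrow> real \<Rightarrow> real" where
  "dq q s t = \<bar>s - t\<bar> powr q"

definition Tset :: "real \<Rightarrow> real \<Rightarrow> real \<Rightarrow> nat \<Rightarrow> real set" where
  "Tset r q S k = {x. \<exists>j::nat. x = real j * r powr (- real k / q) * S} \<inter> {0..S}"

definition piT :: "real \<Rightarrow> real \<Rightarrow> real \<Rightarrow> nat \<Rightarrow> real \<Rightarrow> real" where
  "piT r q S k t = Max {s \<in> Tset r q S k. s \<le> t}"

definition Jset :: "real \<Rightarrow> real \<Rightarrow> real \<Rightarrow> (nat \<Rightarrow> real) \<Rightarrow> nat \<Rightarrow> nat \<Rightarrow> nat set" where
  "Jset r q S t n m = {i \<in> {1..n}.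
      r powr (- real m - 1) * S powr q < dq q (t (i - 1)) (t i)
    \<and> dq q (t (i - 1)) (t i) \<le> r powr (- real m) * S powr q}"

end

theory Submission
  imports Defs
begin


lemma Tset_finite:
  assumes "S > 0" "r > 0"
  shows "finite (Tset r q S k)"
proof -
  define h where "h = r powr (- real k / q) * S"
  have hp: "h > 0" using assms by (simp add: h_def)
  have "Tset r q S k \<subseteq> (\<lambda>j. real j * h) ` {..nat \<lceil>S / h\<rceil>}"
  proof
    fix x assume "x \<in> Tset r q S k"
    then obtain j :: nat where x: "x = real j * h" "x \<le> S"
      by (auto simp: Tset_def h_def mult.assoc)
    have "real j \<le> S / h" using x hp by (simp add: field_simps)
    hence "j \<le> nat \<lceil>S / h\<rceil>" by linarith
    thus "x \<in> (\<lambda>j. real j * h) ` {..nat \<lceil>S / h\<rceil>}" using x by auto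
  qed
  thus ?thesis by (rule finite_subset) auto
qed

lemma zero_Tset: "S > 0 \<Longrightarrow> 0 \<in> Tset r q S k"
  unfolding Tset_def by (auto intro: exI[of _ 0])

lemma piT_props:
  assumes "S > 0" "r > 0" "0 \<le> x" "x \<le> S"
  shows "piT r q S k x \<in> Tset r q S k \<and> piT r q S k x \<le> x
     \<and> x - piT r q S k x < r powr (- real k / q) * S \<and> 0 \<le> piT r q S k x"
proof -
  define h where "h = r powr (- real k / q) * S"
  have hp: "h > 0" using assms by (simp add: h_def)
  define F where "F = {s \<in> Tset r q S k. s \<le> x}"
  have fin: "finite F" unfolding F_def using Tset_finite[OF assms(1,2)] by auto
  have z: "0 \<in> F" unfolding F_def using zero_Tset[OF assms(1)] assms by auto
  have M: "Max F \<in> F" using fin z Max_in by blast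
  define j where "j = nat \<lfloor>x / h\<rfloor>"
  have x0: "x / h \<ge> 0" using assms hp by simp
  have jj: "real j = real_of_int \<lfloor>x / h\<rfloor>" unfolding j_def using x0 by simp
  have jx: "real j \<le> x / h" "x / h < real j + 1" unfolding jj by linarith+
  have jF: "real j * h \<in> F"
  proof -
    have "real j * h \<le> x" using jx(1) hp by (simp add: field_simps)
    moreover have "real j * h \<ge> 0" using hp by simp
    moreover have "real j * h \<le> S" using calculation assms by linarith
    ultimately show ?thesis unfolding F_def Tset_def h_def using assms
      by (auto simp: mult.assoc intro!: exI[of _ j])
  qed
  have "Max F \<ge> real j * h" using jF fin by simp
  moreover have "x - real j * h < h" using jx(2) hp by (simp add: field_simps)
  moreover have "Max F \<ge> 0" using z fin by simp
  ultimately show ?thesis using M unfolding piT_def F_def[symmetric] h_def[symmetric]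
    by (auto simp: F_def)
qed

lemma piT_mono:
  assumes "S > 0" "r > 0" "0 \<le> x" "x \<le> y"
  shows "piT r q S k x \<le> piT r q S k y"
  unfolding piT_def
proof (rule Max_mono)
  show "{s \<in> Tset r q S k. s \<le> x} \<subseteq> {s \<in> Tset r q S k. s \<le> y}" using assms by auto
  show "{s \<in> Tset r q S k. s \<le> x} \<noteq> {}" using zero_Tset[OF assms(1)] assms by auto
  show "finite {s \<in> Tset r q S k. s \<le> y}" using Tset_finite[OF assms(1,2)] by auto
qed

lemma h_step:
  assumes "S > 0" "0 < q" "q < 1" "r \<ge> 4"
  shows "r powr (- real (Suc k) / q) * S \<le> r powr (- real k / q) * S / 4"
proof -
  have "r powr (1/q) \<ge> r powr 1" using assms by (intro powr_mono) (auto simp: field_simps)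
  hence a: "r powr (1/q) \<ge> 4" using assms by simp
  have e: "- real (Suc k) / q = - real k / q - 1/q" using assms by (simp add: field_simps)
  have "r powr (- real (Suc k) / q) = r powr (- real k / q) / r powr (1/q)"
    unfolding e using assms by (simp add: powr_diff)
  also have "\<dots> \<le> r powr (- real k / q) / 4" using a
    by (intro divide_left_mono) auto
  finally show ?thesis using assms by (simp add: field_simps)
qed

lemma h_mono:
  assumes "S > 0" "0 < q" "r \<ge> 1" "a \<le> b"
  shows "r powr (- real b / q) * S \<le> r powr (- real a / q) * S"
  using assms by (intro mult_right_mono powr_mono) (auto simp: divide_right_mono)


theorem lemma2:
  fixes S q r :: real and n N l :: nat and t :: "nat \<Rightarrow> real"
    and tt :: "nat \<Rightarrow> nat \<Rightarrow> real"
  assumes "S > 0" and "0 < q" and "q < 1" and "r \<ge> 4"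
    and "0 \<le> t 0" and "\<forall>i<n. t i < t (Suc i)" and "t n \<le> S"
    and "\<forall>m. m > N \<longrightarrow> Jset r q S t n m = {}"
    and "\<forall>i\<le>n. tt (N + 1) i = piT r q S (N + 1) (t i)"
    and "\<forall>k\<le>N. \<forall>i\<le>n. tt k i = piT r q S k (tt (k + 1) i)"
    and "l \<le> N"
  shows "(\<forall>m i. i \<in> Jset r q S t n m \<and> m + 1 \<le> l \<longrightarrow> tt (l + 1) i \<noteq> tt (l + 1) (i - 1))
       \<and> (\<forall>u \<in> Tset r q S (l + 1).
            card {(i, s). i \<in> {1..n} \<and> (\<exists>m. i \<in> Jset r q S t n m \<and> m + 1 \<le> l)
                   \<and> s \<in> {i - 1, i} \<and> tt (l + 1) s = u} \<le> 2)"
  proof -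
  note A = assms
  define hh where "hh k = r powr (- real k / q) * S" for k
  have r0: "r > 0" "r \<ge> 1" using A by auto
  have hpos: "hh k > 0" for k using A by (simp add: hh_def)
  have hstep: "hh (Suc k) \<le> hh k / 4" for k unfolding hh_def using h_step[OF A(1-4)] .
  have hmono: "a \<le> b \<Longrightarrow> hh b \<le> hh a" for a b unfolding hh_def using h_mono[OF A(1,2) r0(2)] by blast
  have tmono: "\<forall>i. i \<le> j \<longrightarrow> j \<le> n \<longrightarrow> t i \<le> t j" for j
  proof (induction j)
    case 0 then show ?case by simp
  next
    case (Suc j)
    show ?case
    proof (intro allI impI)
      fix i assume i: "i \<le> Suc j" "Suc j \<le> n"
      show "t i \<le> t (Suc j)"
      proof (cases "i = Suc j")
        case True then show ?thesis by simp
      next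
        case False
        then have "i \<le> j" using i by simp
        then have "t i \<le> t j" using Suc.IH i by simp
        moreover have "t j < t (Suc j)" using A(6) i by simp
        ultimately show ?thesis by simp
      qed
    qed
  qed
  have tb: "0 \<le> t i \<and> t i \<le> S" if "i \<le> n" for i
  proof -
    have "t 0 \<le> t i" using tmono[of i] that by simp
    moreover have "t i \<le> t n" using tmono[of n] that by simp
    ultimately show ?thesis using A(5,7) by simp
  qed
  have chain: "(\<forall>i\<le>n. 0 \<le> tt k i \<and> tt k i \<le> t i \<and> t i - tt k i < 4/3 * hh k)
      \<and> (\<forall>i j. i \<le> j \<longrightarrow> j \<le> n \<longrightarrow> tt k i \<le> tt k j)" if "k \<le> N + 1" for k
    using that
  proof (induction k rule: inc_induct)
    case base
    have 1: "\<forall>i\<le>n. 0 \<le> tt (N+1) i \<and> tt (N+1) i \<le> t i \<and> t i - tt (N+1) i < 4/3 * hh (N+1)"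
    proof (intro allI impI)
      fix i assume i: "i \<le> n"
      have "t i - tt (N+1) i < hh (N+1)" "0 \<le> tt (N+1) i" "tt (N+1) i \<le> t i"
        using piT_props[OF A(1) r0(1), where x="t i" and k="N+1" and q=q] tb[OF i] A(9) i by (auto simp: hh_def)
      then show "0 \<le> tt (N+1) i \<and> tt (N+1) i \<le> t i \<and> t i - tt (N+1) i < 4/3 * hh (N+1)"
        using hpos[of "N+1"] by linarith
    qed
    have 2: "\<forall>i j. i \<le> j \<longrightarrow> j \<le> n \<longrightarrow> tt (N+1) i \<le> tt (N+1) j"
    proof (intro allI impI)
      fix i j :: nat assume ij: "i \<le> j" "j \<le> n"
      have "t i \<le> t j" using tmono[of j] ij by simp
      moreover have "0 \<le> t i" using tb ij by simp
      ultimately show "tt (N+1) i \<le> tt (N+1) j"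
        using A(9) piT_mono[OF A(1) r0(1), of "t i" "t j"] ij by simp
    qed
    show ?case using 1 2 by simp
  next
    case (step k)
    have k: "k \<le> N" using step by simp
    have eq: "\<forall>i\<le>n. tt k i = piT r q S k (tt (Suc k) i)" using A(10) k by simp
    have 1: "\<forall>i\<le>n. 0 \<le> tt k i \<and> tt k i \<le> t i \<and> t i - tt k i < 4/3 * hh k"
    proof (intro allI impI)
      fix i assume i: "i \<le> n"
      have x: "0 \<le> tt (Suc k) i" "tt (Suc k) i \<le> t i" "t i - tt (Suc k) i < 4/3 * hh (Suc k)"
        using step.IH i by auto
      have "tt (Suc k) i - tt k i < hh k" "0 \<le> tt k i" "tt k i \<le> tt (Suc k) i"
        using piT_props[OF A(1) r0(1), where x="tt (Suc k) i" and k=k and q=q] x tb[OF i] eq i by (auto simp: hh_def)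
      then show "0 \<le> tt k i \<and> tt k i \<le> t i \<and> t i - tt k i < 4/3 * hh k"
        using x hstep[of k] by linarith
    qed
    have 2: "\<forall>i j. i \<le> j \<longrightarrow> j \<le> n \<longrightarrow> tt k i \<le> tt k j"
    proof (intro allI impI)
      fix i j :: nat assume ij: "i \<le> j" "j \<le> n"
      have "tt (Suc k) i \<le> tt (Suc k) j" using step.IH ij by blast
      moreover have "0 \<le> tt (Suc k) i" using step.IH ij by simp
      ultimately show "tt k i \<le> tt k j"
        using eq piT_mono[OF A(1) r0(1), of "tt (Suc k) i" "tt (Suc k) j"] ij by simp
    qed
    show ?case using 1 2 by simp
  qed
  have ch: "(\<forall>i\<le>n. 0 \<le> tt (l+1) i \<and> tt (l+1) i \<le> t i \<and> t i - tt (l+1) i < 4/3 * hh (l+1))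
      \<and> (\<forall>i j. i \<le> j \<longrightarrow> j \<le> n \<longrightarrow> tt (l+1) i \<le> tt (l+1) j)"
    using chain A(11) by simp
  have claim1: "tt (l + 1) i \<noteq> tt (l + 1) (i - 1)"
    if J: "i \<in> Jset r q S t n m" and ml: "m + 1 \<le> l" for m i
  proof
    assume eqa: "tt (l + 1) i = tt (l + 1) (i - 1)"
    have i: "1 \<le> i" "i \<le> n" using J by (auto simp: Jset_def)
    have d: "r powr (- real m - 1) * S powr q < \<bar>t (i - 1) - t i\<bar> powr q"
      using J by (auto simp: Jset_def dq_def)
    have lt: "t (i-1) < t i" using A(6) i by (metis Suc_diff_1 diff_less le_less_trans less_one not_less)
    have "t (i - 1) \<ge> tt (l+1) (i-1)" "t i < tt (l+1) i + 4/3 * hh (l+1)" using ch i by auto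
    moreover have "hh (l+1) \<le> hh l / 4" using hstep[of l] by simp
    moreover have "hh l \<le> hh (m+1)" using hmono ml by simp
    moreover have "hh l > 0" using hpos by simp
    ultimately have "t i - t (i-1) < hh (m+1)" using eqa by linarith
    hence "\<bar>t (i - 1) - t i\<bar> powr q \<le> hh (m+1) powr q" using lt A(2)
      by (intro powr_mono2) auto
    also have "hh (m+1) powr q = r powr (- real m - 1) * S powr q"
    proof -
      have "hh (m+1) powr q = (r powr (- real (m+1) / q)) powr q * S powr q"
        unfolding hh_def using A r0 by (simp add: powr_mult)
      also have "\<dots> = r powr (- real m - 1) * S powr q"
      proof -
        have "- real (m+1) / q * q = - real m - 1" using A(2) by (simp add: field_simps)
        then show ?thesis by (simp add: powr_powr)
      qed
      finally show ?thesis .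
    qed
    finally show False using d by simp
  qed
  define good where "good i \<longleftrightarrow> i \<in> {1..n} \<and> (\<exists>m. i \<in> Jset r q S t n m \<and> m + 1 \<le> l)" for i
  have strict: "tt (l+1) (i-1) < tt (l+1) i" if "good i" for i
  proof -
    have "tt (l+1) (i-1) \<le> tt (l+1) i" using ch that by (auto simp: good_def)
    moreover have "tt (l+1) i \<noteq> tt (l+1) (i-1)" using that claim1 by (auto simp: good_def)
    ultimately show ?thesis by simp
  qed
  have mono': "tt (l+1) i \<le> tt (l+1) j" if "i \<le> j" "j \<le> n" for i j using ch that by auto
  have claim2: "card {(i, s). good i \<and> s \<in> {i - 1, i} \<and> tt (l + 1) s = u} \<le> 2" for u
  proof -
    define B1 where "B1 = {i. good i \<and> tt (l+1) i = u}"
    define B2 where "B2 = {i. good i \<and> tt (l+1) (i-1) = u}"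
    have fB1: "finite B1" "finite B2" unfolding B1_def B2_def good_def
      by (rule finite_subset[of _ "{1..n}"], blast, simp)+
    have u1: "a = b" if "a \<in> B1" "b \<in> B1" for a b
    proof (rule ccontr)
      assume "a \<noteq> b"
      then consider "a < b" | "b < a" by linarith
      then show False
      proof cases
        case 1
        have "tt (l+1) a \<le> tt (l+1) (b-1)" using 1 that by (intro mono') (auto simp: B1_def good_def)
        then show False using strict[of b] that by (auto simp: B1_def)
      next
        case 2
        have "tt (l+1) b \<le> tt (l+1) (a-1)" using 2 that by (intro mono') (auto simp: B1_def good_def)
        then show False using strict[of a] that by (auto simp: B1_def)
      qed
    qed
    have u2: "a = b" if "a \<in> B2" "b \<in> B2" for a b
    proof (rule ccontr)
      assume "a \<noteq> b"
      then consider "a < b" | "b < a" by linarith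
      then show False
      proof cases
        case 1
        have "tt (l+1) a \<le> tt (l+1) (b-1)" using 1 that by (intro mono') (auto simp: B2_def good_def)
        then show False using strict[of a] that by (auto simp: B2_def)
      next
        case 2
        have "tt (l+1) b \<le> tt (l+1) (a-1)" using 2 that by (intro mono') (auto simp: B2_def good_def)
        then show False using strict[of b] that by (auto simp: B2_def)
      qed
    qed
    have c1: "card B1 \<le> 1" using card_le_Suc0_iff_eq[OF fB1(1)] u1 by auto
    have c2: "card B2 \<le> 1" using card_le_Suc0_iff_eq[OF fB1(2)] u2 by auto
    have sub: "{(i, s). good i \<and> s \<in> {i - 1, i} \<and> tt (l + 1) s = u}
        \<subseteq> (\<lambda>i. (i, i)) ` B1 \<union> (\<lambda>i. (i, i - 1)) ` B2" unfolding B1_def B2_def by auto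
    have "card {(i, s). good i \<and> s \<in> {i - 1, i} \<and> tt (l + 1) s = u}
        \<le> card ((\<lambda>i. (i, i)) ` B1 \<union> (\<lambda>i. (i, i - 1)) ` B2)"
      using sub fB1 by (intro card_mono) auto
    also have "\<dots> \<le> card ((\<lambda>i. (i, i)) ` B1) + card ((\<lambda>i. (i, i - 1)) ` B2)" by (rule card_Un_le)
    also have "\<dots> \<le> card B1 + card B2" by (intro add_mono card_image_le fB1)
    finally show ?thesis using c1 c2 by linarith
  qed
  show ?thesis
  proof (intro conjI allI impI ballI)
    fix m i assume "i \<in> Jset r q S t n m \<and> m + 1 \<le> l"
    then show "tt (l + 1) i \<noteq> tt (l + 1) (i - 1)" using claim1 by blast
  next
    fix u show "card {(i, s). i \<in> {1..n} \<and> (\<exists>m. i \<in> Jset r q S t n m \<and> m + 1 \<le> l)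
                   \<and> s \<in> {i - 1, i} \<and> tt (l + 1) s = u} \<le> 2"
      using claim2[of u] unfolding good_def by (simp add: conj_assoc)
  qed
qed

end
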